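(* Let $R$ be a domain and let $G$ be a finite undirected graph without loops with vertex set $A=\{a_1,\dots,a_n\}$, $n\geqslant 2$, such that the complement graph $\overline{G}$ is connected. Suppose the partially commutative Lie algebra $\mathcal{L}(A;G)=L_1\oplus L_2$ is a direct sum of two subalgebras such that for every $i\in\{1,\dots,n\}$ we have $(a_i)_1=a_i+g_i$ and $(a_i)_2=-g_i$ with $g_i\in\mathcal{L}(A;G)$ and $a_i\notin\mathrm{supp}(\omega_1(g_i))$. Then $g_i=0$ for all $i\in\{1,\dots,n\}$.
   Context: All Lie algebras are over the domain $R$. The complement graph $\overline{G}$ has vertex set $A$, with distinct vertices adjacent iff they are not adjacent in $G$. $\mathcal{L}(A;G)$ is the Lie $R$-algebra presented by generators $A$ and relations $[a_p,a_q]=0$ for all edges $\{a_p,a_q\}$ of $G$. Since the relations are multi-homogeneous, every element $h$ is uniquely a sum of nonzero multi-homogeneous components (multi-degree of a Lie monomial = vector counting occurrences of each $a_p$). $\mathrm{supp}(h)$ is the set of $a_p$ occurring with nonzero exponent in the multi-degree of some component of $h$; $\omega_1(h)$ is the sum of the components of length $1$. A direct sum $L=L_1\oplus L_2$ of subalgebras means $L_1,L_2$ are subalgebras, $L=L_1\oplus L_2$ as $R$-modules and $[L_1,L_2]=0$; for $h\in L$, $(h)_1\in L_1$, $(h)_2\in L_2$ are the unique elements with $h=(h)_1+(h)_2$. *)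

theory Defs
  imports Main "HOL-Library.Poly_Mapping"
begin

text \<open>Lie monomials (non-associative words) over an alphabet.\<close>
datatype 'a lmon = Gen 'a | Br "'a lmon" "'a lmon"

fun leaves :: "'a lmon \<Rightarrow> 'a set" where
  "leaves (Gen a) = {a}"
| "leaves (Br u v) = leaves u \<union> leaves v"

fun mlen :: "'a lmon \<Rightarrow> nat" where
  "mlen (Gen a) = 1"
| "mlen (Br u v) = mlen u + mlen v"

text \<open>Free non-associative R-algebra on the letters: finitely supported
  R-linear combinations of Lie monomials, with the bilinear bracket.\<close>
type_synonym ('a,'r) fna = "'a lmon \<Rightarrow>\<^sub>0 'r"

definition gen :: "'a \<Rightarrow> ('a,'r::comm_ring_1) fna" where
  "gen a = Poly_Mapping.single (Gen a) 1"

definition smul :: "'r::comm_ring_1 \<Rightarrow> ('a,'r) fna \<Rightarrow> ('a,'r) fna" where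
  "smul r f = Poly_Mapping.map (\<lambda>c. r * c) f"

definition br :: "('a,'r::comm_ring_1) fna \<Rightarrow> ('a,'r) fna \<Rightarrow> ('a,'r) fna" where
  "br f g = (\<Sum>s\<in>Poly_Mapping.keys f. \<Sum>t\<in>Poly_Mapping.keys g.
              Poly_Mapping.single (Br s t) (Poly_Mapping.lookup f s * Poly_Mapping.lookup g t))"

definition FA :: "'a set \<Rightarrow> ('a,'r::comm_ring_1) fna set" where
  "FA A = {f. \<forall>t\<in>Poly_Mapping.keys f. leaves t \<subseteq> A}"

text \<open>The ideal whose quotient is the partially commutative Lie algebra
  L(A;G): generated by alternativity, Jacobi, and [a_p,a_q] for edges of G.\<close>
inductive_set pcl_ideal :: "'a set \<Rightarrow> ('a \<Rightarrow> 'a \<Rightarrow> bool) \<Rightarrow> ('a,'r::comm_ring_1) fna set"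
  for A :: "'a set" and E :: "'a \<Rightarrow> 'a \<Rightarrow> bool" where
  alt: "x \<in> FA A \<Longrightarrow> br x x \<in> pcl_ideal A E"
| jacobi: "x \<in> FA A \<Longrightarrow> y \<in> FA A \<Longrightarrow> z \<in> FA A \<Longrightarrow>
     br x (br y z) + br y (br z x) + br z (br x y) \<in> pcl_ideal A E"
| edge: "p \<in> A \<Longrightarrow> q \<in> A \<Longrightarrow> E p q \<Longrightarrow> br (gen p) (gen q) \<in> pcl_ideal A E"
| zero: "0 \<in> pcl_ideal A E"
| add: "x \<in> pcl_ideal A E \<Longrightarrow> y \<in> pcl_ideal A E \<Longrightarrow> x + y \<in> pcl_ideal A E"
| smul: "x \<in> pcl_ideal A E \<Longrightarrow> smul r x \<in> pcl_ideal A E"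
| brl: "x \<in> pcl_ideal A E \<Longrightarrow> y \<in> FA A \<Longrightarrow> br x y \<in> pcl_ideal A E"
| brr: "x \<in> pcl_ideal A E \<Longrightarrow> y \<in> FA A \<Longrightarrow> br y x \<in> pcl_ideal A E"

text \<open>A subalgebra of L(A;G) is represented by its full preimage S in FA A:
  an R-submodule closed under bracket and containing the ideal.\<close>
definition pcl_subalg :: "'a set \<Rightarrow> ('a \<Rightarrow> 'a \<Rightarrow> bool) \<Rightarrow> ('a,'r::comm_ring_1) fna set \<Rightarrow> bool" where
  "pcl_subalg A E S \<longleftrightarrow> S \<subseteq> FA A \<and> pcl_ideal A E \<subseteq> S \<and>
     (\<forall>x\<in>S. \<forall>y\<in>S. x + y \<in> S) \<and> (\<forall>r. \<forall>x\<in>S. smul r x \<in> S) \<and>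
     (\<forall>x\<in>S. \<forall>y\<in>S. br x y \<in> S)"

text \<open>L(A;G) = L1 (+) L2 as a direct sum of subalgebras (modulo the ideal).\<close>
definition pcl_direct_sum :: "'a set \<Rightarrow> ('a \<Rightarrow> 'a \<Rightarrow> bool) \<Rightarrow> ('a,'r::comm_ring_1) fna set \<Rightarrow> ('a,'r) fna set \<Rightarrow> bool" where
  "pcl_direct_sum A E L1 L2 \<longleftrightarrow> pcl_subalg A E L1 \<and> pcl_subalg A E L2 \<and>
     (\<forall>x\<in>FA A. \<exists>u\<in>L1. \<exists>v\<in>L2. x = u + v) \<and>
     L1 \<inter> L2 \<subseteq> pcl_ideal A E \<and>
     (\<forall>u\<in>L1. \<forall>v\<in>L2. br u v \<in> pcl_ideal A E)"

text \<open>omega_1: sum of the length-1 components (computed on a representative;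
  well defined since the ideal has no length-1 part).\<close>
definition omega1 :: "('a,'r::comm_ring_1) fna \<Rightarrow> ('a,'r) fna" where
  "omega1 f = (\<Sum>s\<in>Poly_Mapping.keys f. if mlen s = 1 then Poly_Mapping.single s (Poly_Mapping.lookup f s) else 0)"

text \<open>Support: letters occurring in some monomial with nonzero coefficient
  (used only on omega1 values, where it is well defined).\<close>
definition lsupp :: "('a,'r::comm_ring_1) fna \<Rightarrow> 'a set" where
  "lsupp f = (\<Union>t\<in>Poly_Mapping.keys f. leaves t)"

definition compl_connected :: "'a set \<Rightarrow> ('a \<Rightarrow> 'a \<Rightarrow> bool) \<Rightarrow> bool" where
  "compl_connected A E \<longleftrightarrow>
     (\<forall>x\<in>A. \<forall>y\<in>A. (\<lambda>u v. u \<in> A \<and> v \<in> A \<and> u \<noteq> v \<and> \<not> E u v)\<^sup>*\<^sup>* x y)"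

end

theory Submission
  imports Defs
begin

abbreviation lk :: "('a,'r::comm_ring_1) fna \<Rightarrow> 'a lmon \<Rightarrow> 'r" where
  "lk f t \<equiv> Poly_Mapping.lookup f t"

lemma lookup_br: "lk (br f g) u = (case u of Gen a \<Rightarrow> 0 | Br s t \<Rightarrow> lk f s * lk g t)"
proof (cases u)
  case (Gen a)
  then show ?thesis by (simp add: br_def lookup_sum lookup_single when_def)
next
  case (Br s0 t0)
  have "lk (br f g) u = (\<Sum>s\<in>Poly_Mapping.keys f. if s = s0 then
      (\<Sum>t\<in>Poly_Mapping.keys g. (if t = t0 then lk f s * lk g t else 0)) else 0)"
    unfolding br_def lookup_sum Br by (intro sum.cong refl) (auto simp: lookup_single when_def)
  also have "\<dots> = (\<Sum>s\<in>Poly_Mapping.keys f. if s = s0 then lk f s * lk g t0 else 0)"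
    by (intro sum.cong refl) (simp add: sum.delta in_keys_iff)
  also have "\<dots> = lk f s0 * lk g t0"
    by (simp add: sum.delta in_keys_iff)
  finally show ?thesis using Br by simp
qed

lemma lookup_br_Gen [simp]: "lk (br f g) (Gen a) = 0"
  by (simp add: lookup_br)
lemma lookup_br_Br [simp]: "lk (br f g) (Br s t) = lk f s * lk g t"
  by (simp add: lookup_br)

lemma lookup_smul [simp]: "lk (smul r f) k = r * lk f k"
  by (simp add: smul_def Poly_Mapping.map.rep_eq when_def)

lemma lookup_gen: "lk (gen a) u = (if u = Gen a then 1 else 0)"
  by (auto simp: gen_def lookup_single when_def)

lemma br_eqI: "(\<And>s t. lk f (Br s t) = lk g (Br s t)) \<Longrightarrow> (\<And>a. lk f (Gen a) = lk g (Gen a)) \<Longrightarrow> f = g"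
  apply (rule poly_mapping_eqI) subgoal for k by (cases k) auto done

lemma br_add_left: "br (f + g) h = br f h + br g h"
  by (rule br_eqI) (simp_all add: lookup_add algebra_simps)
lemma br_add_right: "br h (f + g) = br h f + br h g"
  by (rule br_eqI) (simp_all add: lookup_add algebra_simps)
lemma br_minus_left: "br (f - g) h = br f h - br g h"
  by (rule br_eqI) (simp_all add: lookup_minus algebra_simps)
lemma br_minus_right: "br h (f - g) = br h f - br h g"
  by (rule br_eqI) (simp_all add: lookup_minus algebra_simps)
lemma br_uminus_left: "br (- f) h = - br f h"
  by (rule br_eqI) (simp_all add: algebra_simps)
lemma br_uminus_right: "br h (- f) = - br h f"
  by (rule br_eqI) (simp_all add: algebra_simps)
lemma br_zero [simp]: "br 0 h = 0" "br h 0 = 0"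
  by (rule br_eqI, simp_all)+
lemma br_sum_left: "br (\<Sum>x\<in>X. f x) h = (\<Sum>x\<in>X. br (f x) h)"
  by (rule br_eqI) (simp_all add: lookup_sum sum_distrib_right)
lemma br_sum_right: "br h (\<Sum>x\<in>X. f x) = (\<Sum>x\<in>X. br h (f x))"
  by (rule br_eqI) (simp_all add: lookup_sum sum_distrib_left)
lemma smul_neg1: "smul (-1) f = - f"
  by (rule poly_mapping_eqI) simp

definition sel :: "('a lmon \<Rightarrow> bool) \<Rightarrow> ('a,'r::comm_ring_1) fna \<Rightarrow> ('a,'r) fna" where
  "sel P f = (\<Sum>s\<in>Poly_Mapping.keys f. if P s then Poly_Mapping.single s (lk f s) else 0)"

lemma lookup_sel [simp]: "lk (sel P f) u = (if P u then lk f u else 0)"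
proof -
  have "lk (sel P f) u = (\<Sum>s\<in>Poly_Mapping.keys f. if s = u then (if P u then lk f u else 0) else 0)"
    unfolding sel_def lookup_sum by (intro sum.cong refl) (auto simp: lookup_single when_def)
  also have "\<dots> = (if P u then lk f u else 0)" by (simp add: sum.delta in_keys_iff)
  finally show ?thesis .
qed

lemma omega1_sel: "omega1 f = sel (\<lambda>s. mlen s = 1) f"
  unfolding omega1_def sel_def ..

lemma keys_br: "t \<in> Poly_Mapping.keys (br f g) \<Longrightarrow> \<exists>s u. t = Br s u \<and> s \<in> Poly_Mapping.keys f \<and> u \<in> Poly_Mapping.keys g"
  by (cases t) (auto simp: in_keys_iff)

lemma FA_iff: "f \<in> FA A \<longleftrightarrow> (\<forall>t. lk f t \<noteq> 0 \<longrightarrow> leaves t \<subseteq> A)"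
  by (auto simp: FA_def in_keys_iff)

lemma FA_add: "f \<in> FA A \<Longrightarrow> g \<in> FA A \<Longrightarrow> f + g \<in> FA A"
  unfolding FA_iff lookup_add by (metis add.right_neutral add_0)
lemma FA_diff: "f \<in> FA A \<Longrightarrow> g \<in> FA A \<Longrightarrow> f - g \<in> FA A"
  unfolding FA_iff lookup_minus by (metis diff_zero diff_self)
lemma FA_uminus: "f \<in> FA A \<Longrightarrow> - f \<in> FA A"
  by (auto simp: FA_iff)
lemma FA_smul: "f \<in> FA A \<Longrightarrow> smul r f \<in> FA A"
  unfolding FA_iff lookup_smul by (metis mult_zero_right)
lemma FA_zero: "0 \<in> FA A"
  by (auto simp: FA_iff)
lemma FA_br: "f \<in> FA A \<Longrightarrow> g \<in> FA A \<Longrightarrow> br f g \<in> FA A"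
  unfolding FA_iff apply (intro allI impI) subgoal for t by (cases t) (auto, (metis mult_zero_left mult_zero_right subsetD)+) done
lemma FA_gen: "a \<in> A \<Longrightarrow> gen a \<in> FA A"
  by (auto simp: FA_iff lookup_gen)
lemma FA_single: "leaves t \<subseteq> A \<Longrightarrow> Poly_Mapping.single t c \<in> FA A"
  by (auto simp: FA_iff lookup_single when_def)
lemma FA_sel: "f \<in> FA A \<Longrightarrow> sel P f \<in> FA A"
  by (auto simp: FA_iff)
lemma FA_sum: "(\<And>x. x \<in> X \<Longrightarrow> f x \<in> FA A) \<Longrightarrow> sum f X \<in> FA A"
  by (induction X rule: infinite_finite_induct) (auto simp: FA_zero FA_add)

context fixes A :: "'a set" and E :: "'a \<Rightarrow> 'a \<Rightarrow> bool" begin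

lemma I_Gen: "f \<in> pcl_ideal A E \<Longrightarrow> lk f (Gen a) = 0"
  by (induction rule: pcl_ideal.induct) (auto simp: lookup_add)

lemma I_uminus: "f \<in> pcl_ideal A E \<Longrightarrow> - f \<in> pcl_ideal A E"
  using pcl_ideal.smul[of f A E "-1"] by (simp add: smul_neg1)
lemma I_diff: "f \<in> pcl_ideal A E \<Longrightarrow> g \<in> pcl_ideal A E \<Longrightarrow> f - g \<in> pcl_ideal A E"
  using pcl_ideal.add[OF _ I_uminus[of g]] by simp
lemma I_sum: "(\<And>x. x \<in> X \<Longrightarrow> f x \<in> pcl_ideal A E) \<Longrightarrow> sum f X \<in> pcl_ideal A E"
  by (induction X rule: infinite_finite_induct) (auto intro: pcl_ideal.intros)

lemma I_polar: "u \<in> FA A \<Longrightarrow> v \<in> FA A \<Longrightarrow> br u v + br v u \<in> pcl_ideal A E"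
proof -
  assume u: "u \<in> FA A" and v: "v \<in> FA A"
  have "br u v + br v u = br (u+v) (u+v) - br u u - br v v"
    by (simp add: br_add_left br_add_right algebra_simps)
  also have "\<dots> \<in> pcl_ideal A E"
    by (intro I_diff pcl_ideal.alt FA_add u v)
  finally show ?thesis .
qed

lemma I_phi:
  assumes sym: "\<And>p q. E p q \<Longrightarrow> E q p" and kl: "k \<noteq> l" "\<not> E k l"
  shows "f \<in> pcl_ideal A E \<Longrightarrow> lk f (Br (Gen k) (Gen l)) = lk f (Br (Gen l) (Gen k))"
proof (induction rule: pcl_ideal.induct)
  case (edge p q)
  then show ?case using kl sym by (auto simp: lookup_gen)
next
  case (brl x y) then show ?case by (simp add: I_Gen)
next
  case (brr x y) then show ?case by (simp add: I_Gen)
qed (auto simp: lookup_add mult.commute)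

end

definition hi :: "nat \<Rightarrow> ('a,'r::comm_ring_1) fna \<Rightarrow> bool" where
  "hi d f \<longleftrightarrow> (\<forall>t. lk f t \<noteq> 0 \<longrightarrow> d \<le> mlen t)"

definition homog :: "nat \<Rightarrow> ('a,'r::comm_ring_1) fna \<Rightarrow> bool" where
  "homog d f \<longleftrightarrow> (\<forall>t. lk f t \<noteq> 0 \<longrightarrow> mlen t = d)"

definition proj :: "nat \<Rightarrow> ('a,'r::comm_ring_1) fna \<Rightarrow> ('a,'r) fna" where
  "proj d f = sel (\<lambda>t. mlen t = d) f"

lemma lookup_proj [simp]: "lk (proj d f) t = (if mlen t = d then lk f t else 0)"
  by (simp add: proj_def)

lemma homog_proj: "homog d (proj d f)"
  by (auto simp: homog_def)

lemma homog_br: "homog a x \<Longrightarrow> homog b y \<Longrightarrow> homog (a+b) (br x y)"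
  unfolding homog_def apply (intro allI impI) subgoal for t by (cases t) (auto, metis mult_zero_left mult_zero_right) done

lemma proj_homog: "homog a x \<Longrightarrow> proj d x = (if a = d then x else 0)"
  by (rule poly_mapping_eqI) (auto simp: homog_def)

lemma proj_add: "proj d (x + y) = proj d x + proj d y"
  by (rule poly_mapping_eqI) (simp add: lookup_add)
lemma proj_smul: "proj d (smul r x) = smul r (proj d x)"
  by (rule poly_mapping_eqI) simp
lemma proj_sum: "proj d (sum f X) = (\<Sum>x\<in>X. proj d (f x))"
  by (rule poly_mapping_eqI) (simp add: lookup_sum)
lemma proj_zero [simp]: "proj d 0 = 0"
  by (rule poly_mapping_eqI) simp

lemma proj_decomp: "(\<And>t. lk x t \<noteq> 0 \<Longrightarrow> mlen t \<le> N) \<Longrightarrow> x = (\<Sum>a\<le>N. proj a x)"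
proof (rule poly_mapping_eqI)
  fix t assume N: "\<And>t. lk x t \<noteq> 0 \<Longrightarrow> mlen t \<le> N"
  have "lk (\<Sum>a\<le>N. proj a x) t = (\<Sum>a\<le>N. if a = mlen t then lk x t else 0)"
    by (simp add: lookup_sum eq_commute)
  also have "\<dots> = lk x t" using N[of t] by (cases "mlen t \<le> N") (auto simp: sum.delta)
  finally show "lk x t = lk (\<Sum>a\<le>N. proj a x) t" by simp
qed

lemma bound_ex: "\<exists>N. \<forall>t. lk x t \<noteq> 0 \<longrightarrow> mlen t \<le> N"
proof -
  have "finite (mlen ` Poly_Mapping.keys x)" by simp
  then obtain N where "\<forall>m\<in>mlen ` Poly_Mapping.keys x. m \<le> N"
    using finite_nat_set_iff_bounded_le by blast
  then show ?thesis by (intro exI[of _ N]) (auto simp: in_keys_iff)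
qed

lemma proj_br_exp:
  assumes "\<And>t. lk x t \<noteq> 0 \<Longrightarrow> mlen t \<le> N" "\<And>t. lk y t \<noteq> 0 \<Longrightarrow> mlen t \<le> N"
  shows "proj d (br x y) = (\<Sum>a\<le>N. \<Sum>b\<le>N. if a + b = d then br (proj a x) (proj b y) else 0)"
proof -
  have "br x y = br (\<Sum>a\<le>N. proj a x) (\<Sum>b\<le>N. proj b y)"
    using proj_decomp[of x N, OF assms(1)] proj_decomp[of y N, OF assms(2)] by simp
  then have "proj d (br x y) = (\<Sum>a\<le>N. \<Sum>b\<le>N. proj d (br (proj a x) (proj b y)))"
    unfolding br_sum_left by (simp add: br_sum_right proj_sum)
  also have "\<dots> = (\<Sum>a\<le>N. \<Sum>b\<le>N. if a + b = d then br (proj a x) (proj b y) else 0)"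
    by (intro sum.cong refl) (simp add: proj_homog[OF homog_br[OF homog_proj homog_proj]])
  finally show ?thesis .
qed

lemma FA_proj: "x \<in> FA A \<Longrightarrow> proj a x \<in> FA A"
  unfolding proj_def by (rule FA_sel)

lemma rot3: "(\<Sum>b\<in>K. \<Sum>c\<in>K. \<Sum>a\<in>K. G a b c) = (\<Sum>a\<in>K. \<Sum>b\<in>K. \<Sum>c\<in>K. G a b c)"
proof -
  have "(\<Sum>b\<in>K. \<Sum>c\<in>K. \<Sum>a\<in>K. G a b c) = (\<Sum>b\<in>K. \<Sum>a\<in>K. \<Sum>c\<in>K. G a b c)"
    by (rule sum.cong[OF refl], rule sum.swap)
  also have "\<dots> = (\<Sum>a\<in>K. \<Sum>b\<in>K. \<Sum>c\<in>K. G a b c)" by (rule sum.swap)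
  finally show ?thesis .
qed

lemma rot3': "(\<Sum>c\<in>K. \<Sum>a\<in>K. \<Sum>b\<in>K. G a b c) = (\<Sum>a\<in>K. \<Sum>b\<in>K. \<Sum>c\<in>K. G a b c)"
proof -
  have "(\<Sum>c\<in>K. \<Sum>a\<in>K. \<Sum>b\<in>K. G a b c) = (\<Sum>a\<in>K. \<Sum>c\<in>K. \<Sum>b\<in>K. G a b c)"
    by (rule sum.swap)
  also have "\<dots> = (\<Sum>a\<in>K. \<Sum>b\<in>K. \<Sum>c\<in>K. G a b c)"
    by (rule sum.cong[OF refl], rule sum.swap)
  finally show ?thesis .
qed

lemma proj_br3_exp:
  assumes "\<And>t. lk x t \<noteq> 0 \<Longrightarrow> mlen t \<le> N" "\<And>t. lk y t \<noteq> 0 \<Longrightarrow> mlen t \<le> N"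
    "\<And>t. lk z t \<noteq> 0 \<Longrightarrow> mlen t \<le> N"
  shows "proj d (br x (br y z)) = (\<Sum>a\<le>N. \<Sum>b\<le>N. \<Sum>c\<le>N.
     if a + b + c = d then br (proj a x) (br (proj b y) (proj c z)) else 0)"
proof -
  have "br x (br y z) = br (\<Sum>a\<le>N. proj a x) (br (\<Sum>b\<le>N. proj b y) (\<Sum>c\<le>N. proj c z))"
    using proj_decomp[of x N, OF assms(1)] proj_decomp[of y N, OF assms(2)]
      proj_decomp[of z N, OF assms(3)] by simp
  then have "proj d (br x (br y z)) = (\<Sum>a\<le>N. \<Sum>b\<le>N. \<Sum>c\<le>N. proj d (br (proj a x) (br (proj b y) (proj c z))))"
    unfolding br_sum_left by (simp add: br_sum_right proj_sum)
  also have "\<dots> = (\<Sum>a\<le>N. \<Sum>b\<le>N. \<Sum>c\<le>N.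
     if a + b + c = d then br (proj a x) (br (proj b y) (proj c z)) else 0)"
    by (intro sum.cong refl)
      (simp add: proj_homog[OF homog_br[OF homog_proj homog_br[OF homog_proj homog_proj]]] add.assoc)
  finally show ?thesis .
qed

context fixes A :: "'a set" and E :: "'a \<Rightarrow> 'a \<Rightarrow> bool" begin

lemma sym_sum_I:
  assumes "finite (K::nat set)" "\<And>a. a \<in> K \<Longrightarrow> u a \<in> FA A"
  shows "(\<Sum>a\<in>K. \<Sum>b\<in>K. if a + b = d then br (u a) (u b) else 0) \<in> pcl_ideal A E"
  using assms
proof (induction K rule: finite_induct)
  case empty then show ?case by (simp add: pcl_ideal.zero)
next
  case (insert c K)
  define F where "F a b = (if a + b = d then br (u a) (u b) else 0)" for a b
  have eq: "(\<Sum>a\<in>insert c K. \<Sum>b\<in>insert c K. F a b) =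
     F c c + (\<Sum>b\<in>K. F c b + F b c) + (\<Sum>a\<in>K. \<Sum>b\<in>K. F a b)"
    using insert(1,2) by (simp add: sum.distrib algebra_simps)
  have "F c c \<in> pcl_ideal A E"
    unfolding F_def using insert(4) by (auto intro: pcl_ideal.intros)
  moreover have "(\<Sum>b\<in>K. F c b + F b c) \<in> pcl_ideal A E"
  proof (intro I_sum)
    fix b assume b: "b \<in> K"
    show "F c b + F b c \<in> pcl_ideal A E"
    proof (cases "c + b = d")
      case True
      then have "b + c = d" by simp
      then show ?thesis using True b insert(4) unfolding F_def by (simp add: I_polar)
    next
      case False
      then have "b + c \<noteq> d" by simp
      then show ?thesis using False unfolding F_def by (simp add: pcl_ideal.zero)
    qed
  qed
  moreover have "(\<Sum>a\<in>K. \<Sum>b\<in>K. F a b) \<in> pcl_ideal A E"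
    unfolding F_def using insert by auto
  ultimately show ?case unfolding F_def[symmetric] eq by (intro pcl_ideal.add)
qed

lemma I_proj: "f \<in> pcl_ideal A E \<Longrightarrow> \<forall>d. proj d f \<in> pcl_ideal A E"
proof (induction rule: pcl_ideal.induct)
  case (alt x)
  obtain N where hN: "\<And>t. lk x t \<noteq> 0 \<Longrightarrow> mlen t \<le> N" using bound_ex by blast
  show ?case
  proof
    fix d show "proj d (br x x) \<in> pcl_ideal A E"
    proof -
      have e: "proj d (br x x) = (\<Sum>a\<le>N. \<Sum>b\<le>N. if a + b = d then br (proj a x) (proj b x) else 0)"
        by (rule proj_br_exp) (use hN in auto)
      show ?thesis unfolding e by (rule sym_sum_I) (auto intro: FA_proj alt)
    qed
  qed
next
  case (jacobi x y z)
  obtain N1 where N1: "\<And>t. lk x t \<noteq> 0 \<Longrightarrow> mlen t \<le> N1" using bound_ex by blast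
  obtain N2 where N2: "\<And>t. lk y t \<noteq> 0 \<Longrightarrow> mlen t \<le> N2" using bound_ex by blast
  obtain N3 where N3: "\<And>t. lk z t \<noteq> 0 \<Longrightarrow> mlen t \<le> N3" using bound_ex by blast
  define N where "N = N1 + N2 + N3"
  have Nx: "\<And>t. lk x t \<noteq> 0 \<Longrightarrow> mlen t \<le> N" using N1 unfolding N_def by fastforce
  have Ny: "\<And>t. lk y t \<noteq> 0 \<Longrightarrow> mlen t \<le> N" using N2 unfolding N_def by fastforce
  have Nz: "\<And>t. lk z t \<noteq> 0 \<Longrightarrow> mlen t \<le> N" using N3 unfolding N_def by fastforce
  show ?case
  proof
    fix d
    have e1: "proj d (br x (br y z)) = (\<Sum>a\<le>N. \<Sum>b\<le>N. \<Sum>c\<le>N.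
       if a + b + c = d then br (proj a x) (br (proj b y) (proj c z)) else 0)"
      by (rule proj_br3_exp) (use Nx Ny Nz in auto)
    have e2: "proj d (br y (br z x)) = (\<Sum>a\<le>N. \<Sum>b\<le>N. \<Sum>c\<le>N.
       if a + b + c = d then br (proj b y) (br (proj c z) (proj a x)) else 0)"
    proof -
      have "proj d (br y (br z x)) = (\<Sum>b\<le>N. \<Sum>c\<le>N. \<Sum>a\<le>N.
       if b + c + a = d then br (proj b y) (br (proj c z) (proj a x)) else 0)"
        by (rule proj_br3_exp) (use Nx Ny Nz in auto)
      also have "\<dots> = (\<Sum>a\<le>N. \<Sum>b\<le>N. \<Sum>c\<le>N.
       if b + c + a = d then br (proj b y) (br (proj c z) (proj a x)) else 0)"
        by (rule rot3)
      finally show ?thesis by (simp add: add_ac)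
    qed
    have e3: "proj d (br z (br x y)) = (\<Sum>a\<le>N. \<Sum>b\<le>N. \<Sum>c\<le>N.
       if a + b + c = d then br (proj c z) (br (proj a x) (proj b y)) else 0)"
    proof -
      have "proj d (br z (br x y)) = (\<Sum>c\<le>N. \<Sum>a\<le>N. \<Sum>b\<le>N.
       if c + a + b = d then br (proj c z) (br (proj a x) (proj b y)) else 0)"
        by (rule proj_br3_exp) (use Nx Ny Nz in auto)
      also have "\<dots> = (\<Sum>a\<le>N. \<Sum>b\<le>N. \<Sum>c\<le>N.
       if c + a + b = d then br (proj c z) (br (proj a x) (proj b y)) else 0)"
        by (rule rot3')
      finally show ?thesis by (simp add: add_ac)
    qed
    have "proj d (br x (br y z) + br y (br z x) + br z (br x y)) =
      (\<Sum>a\<le>N. \<Sum>b\<le>N. \<Sum>c\<le>N. if a + b + c = d then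
         br (proj a x) (br (proj b y) (proj c z)) + br (proj b y) (br (proj c z) (proj a x))
         + br (proj c z) (br (proj a x) (proj b y)) else 0)"
      unfolding proj_add e1 e2 e3 by (simp add: sum.distrib[symmetric]) (intro sum.cong refl, simp)
    also have "\<dots> \<in> pcl_ideal A E"
      by (intro I_sum) (auto intro: pcl_ideal.intros FA_proj jacobi)
    finally show "proj d (br x (br y z) + br y (br z x) + br z (br x y)) \<in> pcl_ideal A E" .
  qed
next
  case (edge p q)
  have h: "homog 2 (br (gen p) (gen q))"
  proof -
    have "homog 1 (gen p)" "homog 1 (gen q)" by (auto simp: homog_def lookup_gen split: if_splits)
    from homog_br[OF this] show ?thesis by (simp add: numeral_2_eq_2)
  qed
  show ?case unfolding proj_homog[OF h] using edge by (auto intro: pcl_ideal.intros)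
next
  case zero then show ?case by (simp add: pcl_ideal.zero)
next
  case (add x y) then show ?case by (simp add: proj_add pcl_ideal.add)
next
  case (smul x r) then show ?case by (simp add: proj_smul pcl_ideal.smul)
next
  case (brl x y)
  obtain N1 where N1: "\<And>t. lk x t \<noteq> 0 \<Longrightarrow> mlen t \<le> N1" using bound_ex by blast
  obtain N2 where N2: "\<And>t. lk y t \<noteq> 0 \<Longrightarrow> mlen t \<le> N2" using bound_ex by blast
  have Nx: "\<And>t. lk x t \<noteq> 0 \<Longrightarrow> mlen t \<le> N1 + N2" using N1 by fastforce
  have Ny: "\<And>t. lk y t \<noteq> 0 \<Longrightarrow> mlen t \<le> N1 + N2" using N2 by fastforce
  show ?case
  proof
    fix d
    have e: "proj d (br x y) = (\<Sum>a\<le>N1+N2. \<Sum>b\<le>N1+N2. if a + b = d then br (proj a x) (proj b y) else 0)"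
      by (rule proj_br_exp) (use Nx Ny in auto)
    show "proj d (br x y) \<in> pcl_ideal A E" unfolding e using brl
      by (intro I_sum) (auto intro: pcl_ideal.intros FA_proj)
  qed
next
  case (brr x y)
  obtain N1 where N1: "\<And>t. lk x t \<noteq> 0 \<Longrightarrow> mlen t \<le> N1" using bound_ex by blast
  obtain N2 where N2: "\<And>t. lk y t \<noteq> 0 \<Longrightarrow> mlen t \<le> N2" using bound_ex by blast
  have Nx: "\<And>t. lk x t \<noteq> 0 \<Longrightarrow> mlen t \<le> N1 + N2" using N1 by fastforce
  have Ny: "\<And>t. lk y t \<noteq> 0 \<Longrightarrow> mlen t \<le> N1 + N2" using N2 by fastforce
  show ?case
  proof
    fix d
    have e: "proj d (br y x) = (\<Sum>a\<le>N1+N2. \<Sum>b\<le>N1+N2. if a + b = d then br (proj a y) (proj b x) else 0)"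
      by (rule proj_br_exp) (use Nx Ny in auto)
    show "proj d (br y x) \<in> pcl_ideal A E" unfolding e using brr
      by (intro I_sum) (auto intro: pcl_ideal.intros FA_proj)
  qed
qed

lemma I_trunc: "f \<in> pcl_ideal A E \<Longrightarrow> sel (\<lambda>t. mlen t \<le> N) f \<in> pcl_ideal A E"
proof -
  assume f: "f \<in> pcl_ideal A E"
  have "sel (\<lambda>t. mlen t \<le> N) f = (\<Sum>a\<le>N. proj a f)"
  proof (rule poly_mapping_eqI)
    fix t
    have "lk (\<Sum>a\<le>N. proj a f) t = (\<Sum>a\<le>N. if a = mlen t then lk f t else 0)"
      by (simp add: lookup_sum eq_commute)
    also have "\<dots> = lk (sel (\<lambda>t. mlen t \<le> N) f) t" by (simp add: sum.delta)
    finally show "lk (sel (\<lambda>t. mlen t \<le> N) f) t = lk (\<Sum>a\<le>N. proj a f) t" by simp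
  qed
  also have "\<dots> \<in> pcl_ideal A E" using I_proj[OF f] by (intro I_sum) auto
  finally show ?thesis .
qed

end


lemma mlen_pos: "1 \<le> mlen t"
  by (induction t) auto

lemma hi_mono: "hi a f \<Longrightarrow> b \<le> a \<Longrightarrow> hi b f"
  by (auto simp: hi_def)
lemma hi_br: "hi a x \<Longrightarrow> hi b y \<Longrightarrow> hi (a+b) (br x y)"
  unfolding hi_def apply (intro allI impI) subgoal for t
    by (cases t) (auto, metis add_mono mult_zero_left mult_zero_right) done
lemma hi_smul: "hi a x \<Longrightarrow> hi a (smul r x)"
  unfolding hi_def by (auto, metis mult_zero_right)
lemma hi_uminus: "hi a x \<Longrightarrow> hi a (- x)"
  unfolding hi_def by auto
lemma hi_sum: "(\<And>x. x \<in> X \<Longrightarrow> hi a (f x)) \<Longrightarrow> hi a (sum f X)"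
proof (induction X rule: infinite_finite_induct)
  case (insert x F) then show ?case
    unfolding hi_def by (simp add: lookup_add) (metis add.left_neutral add_0_right)
qed (auto simp: hi_def)

fun sigm :: "('a \<Rightarrow> ('a,'r::comm_ring_1) fna) \<Rightarrow> 'a lmon \<Rightarrow> ('a,'r) fna" where
  "sigm g (Gen a) = gen a + g a"
| "sigm g (Br u v) = br (sigm g u) (sigm g v)"

definition taum :: "('a \<Rightarrow> ('a,'r::comm_ring_1) fna) \<Rightarrow> 'a lmon \<Rightarrow> ('a,'r) fna" where
  "taum g t = Poly_Mapping.single t 1 - sigm g t"

definition sig :: "('a \<Rightarrow> ('a,'r::comm_ring_1) fna) \<Rightarrow> ('a,'r) fna \<Rightarrow> ('a,'r) fna" where
  "sig g f = (\<Sum>t\<in>Poly_Mapping.keys f. smul (lk f t) (sigm g t))"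

lemma single_Br: "Poly_Mapping.single (Br u v) (1::'r::comm_ring_1) = br (Poly_Mapping.single u 1) (Poly_Mapping.single v 1)"
  by (rule br_eqI) (auto simp: lookup_single when_def)

lemma expand: "f = (\<Sum>t\<in>Poly_Mapping.keys f. smul (lk f t) (Poly_Mapping.single t 1))"
proof (rule poly_mapping_eqI)
  fix u
  have "lk (\<Sum>t\<in>Poly_Mapping.keys f. smul (lk f t) (Poly_Mapping.single t 1)) u =
     (\<Sum>t\<in>Poly_Mapping.keys f. if t = u then lk f u else 0)"
    unfolding lookup_sum lookup_smul by (intro sum.cong refl) (auto simp: lookup_single when_def)
  also have "\<dots> = lk f u" by (simp add: sum.delta in_keys_iff)
  finally show "lk f u = lk (\<Sum>t\<in>Poly_Mapping.keys f. smul (lk f t) (Poly_Mapping.single t 1)) u" by simp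
qed

lemma subalg_props:
  assumes "pcl_subalg A E S"
  shows "S \<subseteq> FA A" "pcl_ideal A E \<subseteq> S" "0 \<in> S"
    "x \<in> S \<Longrightarrow> y \<in> S \<Longrightarrow> x + y \<in> S"
    "x \<in> S \<Longrightarrow> smul r x \<in> S"
    "x \<in> S \<Longrightarrow> - x \<in> S"
    "x \<in> S \<Longrightarrow> y \<in> S \<Longrightarrow> x - y \<in> S"
    "x \<in> S \<Longrightarrow> y \<in> S \<Longrightarrow> br x y \<in> S"
    "(\<And>x. x \<in> X \<Longrightarrow> f x \<in> S) \<Longrightarrow> sum f X \<in> S"
proof -
  show 1: "S \<subseteq> FA A" "pcl_ideal A E \<subseteq> S" using assms by (auto simp: pcl_subalg_def)
  show 0: "0 \<in> S" using 1 pcl_ideal.zero by blast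
  show add: "x \<in> S \<Longrightarrow> y \<in> S \<Longrightarrow> x + y \<in> S" for x y using assms by (auto simp: pcl_subalg_def)
  show sm: "x \<in> S \<Longrightarrow> smul r x \<in> S" for x r using assms by (auto simp: pcl_subalg_def)
  show um: "x \<in> S \<Longrightarrow> - x \<in> S" for x using sm[of x "-1"] by (simp add: smul_neg1)
  show "x \<in> S \<Longrightarrow> y \<in> S \<Longrightarrow> x - y \<in> S" using add[OF _ um[of y]] by simp
  show "x \<in> S \<Longrightarrow> y \<in> S \<Longrightarrow> br x y \<in> S" using assms by (auto simp: pcl_subalg_def)
  show "(\<And>x. x \<in> X \<Longrightarrow> f x \<in> S) \<Longrightarrow> sum f X \<in> S"
    by (induction X rule: infinite_finite_induct) (auto simp: 0 add)
qed

context
  fixes A :: "'a set" and E :: "'a \<Rightarrow> 'a \<Rightarrow> bool"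
    and L1 L2 :: "('a, 'r::comm_ring_1) fna set" and g :: "'a \<Rightarrow> ('a, 'r) fna"
  assumes ds: "pcl_direct_sum A E L1 L2"
    and gFA: "\<And>i. i \<in> A \<Longrightarrow> g i \<in> FA A"
    and g1: "\<And>i. i \<in> A \<Longrightarrow> gen i + g i \<in> L1"
    and g2: "\<And>i. i \<in> A \<Longrightarrow> - g i \<in> L2"
    and ghi: "\<And>i. i \<in> A \<Longrightarrow> hi 2 (g i)"
begin

lemma S1: "pcl_subalg A E L1" and S2: "pcl_subalg A E L2"
  using ds by (auto simp: pcl_direct_sum_def)

lemma L12: "u \<in> L1 \<Longrightarrow> v \<in> L2 \<Longrightarrow> br u v \<in> pcl_ideal A E"
  using ds by (auto simp: pcl_direct_sum_def)
lemma L12i: "L1 \<inter> L2 \<subseteq> pcl_ideal A E"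
  using ds by (auto simp: pcl_direct_sum_def)

lemma L21: "u \<in> L1 \<Longrightarrow> v \<in> L2 \<Longrightarrow> br v u \<in> pcl_ideal A E"
proof -
  assume u: "u \<in> L1" and v: "v \<in> L2"
  have "br v u = (br u v + br v u) - br u v" by simp
  also have "\<dots> \<in> pcl_ideal A E"
    using u v subalg_props(1)[OF S1] subalg_props(1)[OF S2]
    by (intro I_diff I_polar L12) auto
  finally show ?thesis .
qed

lemma sigm_L1: "leaves t \<subseteq> A \<Longrightarrow> sigm g t \<in> L1"
  by (induction t) (auto intro: g1 subalg_props(8)[OF S1])

lemma taum_L2: "leaves t \<subseteq> A \<Longrightarrow> taum g t \<in> L2"
  and taum_Br: "leaves (Br u v) \<subseteq> A \<Longrightarrow> taum g (Br u v) - br (taum g u) (taum g v) \<in> pcl_ideal A E"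
proof -
  have br_case: "taum g (Br u v) - br (taum g u) (taum g v) \<in> pcl_ideal A E"
    if "taum g u \<in> L2" "taum g v \<in> L2" "leaves u \<subseteq> A" "leaves v \<subseteq> A" for u v
  proof -
    have "taum g (Br u v) - br (taum g u) (taum g v) = br (sigm g u) (taum g v) + br (taum g u) (sigm g v)"
      unfolding taum_def single_Br
      by (simp add: br_minus_left br_minus_right algebra_simps)
    also have "\<dots> \<in> pcl_ideal A E"
      using that sigm_L1 by (intro pcl_ideal.add L12 L21) auto
    finally show ?thesis .
  qed
  show L2: "leaves t \<subseteq> A \<Longrightarrow> taum g t \<in> L2" for t
  proof (induction t)
    case (Gen a)
    have "taum g (Gen a) = - g a" by (simp add: taum_def gen_def)
    then show ?case using g2 Gen by simp
  next
    case (Br u v)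
    then have "taum g (Br u v) = (taum g (Br u v) - br (taum g u) (taum g v)) + br (taum g u) (taum g v)"
      by simp
    also have "\<dots> \<in> L2" using Br br_case
      by (intro subalg_props(4,8)[OF S2]) (auto intro: subalg_props(2)[OF S2, THEN subsetD])
    finally show ?case .
  qed
  show "leaves (Br u v) \<subseteq> A \<Longrightarrow> taum g (Br u v) - br (taum g u) (taum g v) \<in> pcl_ideal A E"
    using br_case L2 by auto
qed

lemma sig_props:
  assumes f: "f \<in> FA A"
  shows "sig g f \<in> L1" "f - sig g f = (\<Sum>t\<in>Poly_Mapping.keys f. smul (lk f t) (taum g t))"
    "f - sig g f \<in> L2"
proof -
  have lv: "t \<in> Poly_Mapping.keys f \<Longrightarrow> leaves t \<subseteq> A" for t using f by (auto simp: FA_def)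
  show "sig g f \<in> L1" unfolding sig_def
    by (intro subalg_props(9)[OF S1] subalg_props(5)[OF S1] sigm_L1 lv)
  have "f - sig g f = (\<Sum>t\<in>Poly_Mapping.keys f. smul (lk f t) (Poly_Mapping.single t 1))
       - (\<Sum>t\<in>Poly_Mapping.keys f. smul (lk f t) (sigm g t))"
    unfolding sig_def using expand[of f] by simp
  also have "\<dots> = (\<Sum>t\<in>Poly_Mapping.keys f. smul (lk f t) (taum g t))"
    unfolding sum_subtractf[symmetric] taum_def
    by (intro sum.cong refl poly_mapping_eqI) (simp add: lookup_minus algebra_simps)
  finally show e: "f - sig g f = (\<Sum>t\<in>Poly_Mapping.keys f. smul (lk f t) (taum g t))" .
  show "f - sig g f \<in> L2" unfolding e
    by (intro subalg_props(9)[OF S2] subalg_props(5)[OF S2] taum_L2 lv)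
qed


lemma D1: "leaves t \<subseteq> A \<Longrightarrow> \<exists>h. h \<in> FA A \<and> hi (mlen t + 1) h \<and> taum g t - h \<in> pcl_ideal A E"
proof (induction t)
  case (Gen a)
  have "taum g (Gen a) = - g a" by (simp add: taum_def gen_def)
  then show ?case using Gen gFA[of a] ghi[of a]
    by (intro exI[of _ "- g a"]) (auto simp: numeral_2_eq_2 intro: FA_uminus hi_uminus pcl_ideal.zero)
next
  case (Br u v)
  then obtain hu hv where hu: "hu \<in> FA A" "hi (mlen u + 1) hu" "taum g u - hu \<in> pcl_ideal A E"
    and hv: "hv \<in> FA A" "hi (mlen v + 1) hv" "taum g v - hv \<in> pcl_ideal A E" by auto
  have tv: "taum g v \<in> FA A" using taum_L2[of v] Br subalg_props(1)[OF S2] by auto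
  have "taum g (Br u v) - br hu hv = (taum g (Br u v) - br (taum g u) (taum g v))
     + br (taum g u - hu) (taum g v) + br hu (taum g v - hv)"
    by (simp add: br_minus_left br_minus_right)
  also have "\<dots> \<in> pcl_ideal A E"
    using taum_Br[of u v] Br hu hv tv by (intro pcl_ideal.add pcl_ideal.brl pcl_ideal.brr) auto
  finally have "taum g (Br u v) - br hu hv \<in> pcl_ideal A E" .
  moreover have "hi (mlen (Br u v) + 1) (br hu hv)"
    using hi_br[OF hu(2) hv(2)] by (rule hi_mono) simp
  ultimately show ?case using hu hv by (intro exI[of _ "br hu hv"]) (auto intro: FA_br)
qed

lemma D3: "y \<in> L2 \<Longrightarrow> \<exists>h. h \<in> FA A \<and> hi m h \<and> y - h \<in> pcl_ideal A E"
proof (induction m)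
  case 0
  then show ?case using subalg_props(1)[OF S2] by (intro exI[of _ y]) (auto simp: hi_def intro: pcl_ideal.zero)
next
  case (Suc m)
  then obtain h where h: "h \<in> FA A" "hi m h" "y - h \<in> pcl_ideal A E" by auto
  have hL2: "h \<in> L2"
  proof -
    have "h = y - (y - h)" by simp
    also have "\<dots> \<in> L2" by (rule subalg_props(7)[OF S2]) (use Suc(2) h(3) subalg_props(2)[OF S2] in auto)
    finally show ?thesis .
  qed
  have sI: "sig g h \<in> pcl_ideal A E"
  proof -
    have "sig g h = h - (h - sig g h)" by simp
    also have "\<dots> \<in> L2" using hL2 sig_props(3)[OF h(1)] by (rule subalg_props(7)[OF S2])
    finally show ?thesis using sig_props(1)[OF h(1)] L12i by auto
  qed
  have lv: "t \<in> Poly_Mapping.keys h \<Longrightarrow> leaves t \<subseteq> A" for t using h(1) by (auto simp: FA_def)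
  define H where "H t = (SOME h'. h' \<in> FA A \<and> hi (mlen t + 1) h' \<and> taum g t - h' \<in> pcl_ideal A E)" for t
  have H: "H t \<in> FA A \<and> hi (mlen t + 1) (H t) \<and> taum g t - H t \<in> pcl_ideal A E"
    if "t \<in> Poly_Mapping.keys h" for t
    unfolding H_def using D1[OF lv[OF that]] by (rule someI_ex)
  define h2 where "h2 = (\<Sum>t\<in>Poly_Mapping.keys h. smul (lk h t) (H t))"
  have "y - h2 = (y - h) + sig g h + (\<Sum>t\<in>Poly_Mapping.keys h. smul (lk h t) (taum g t - H t))"
  proof -
    have "(\<Sum>t\<in>Poly_Mapping.keys h. smul (lk h t) (taum g t - H t)) =
       (\<Sum>t\<in>Poly_Mapping.keys h. smul (lk h t) (taum g t)) - h2"
      unfolding h2_def sum_subtractf[symmetric]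
      by (intro sum.cong refl poly_mapping_eqI) (simp add: lookup_minus algebra_simps)
    moreover have "y - h2 = (y - h) + sig g h + ((h - sig g h) - h2)" by (simp add: algebra_simps)
    ultimately show ?thesis using sig_props(2)[OF h(1)] by simp
  qed
  also have "\<dots> \<in> pcl_ideal A E"
    using h(3) sI H by (intro pcl_ideal.add I_sum pcl_ideal.smul) auto
  finally have "y - h2 \<in> pcl_ideal A E" .
  moreover have "h2 \<in> FA A" unfolding h2_def using H by (intro FA_sum FA_smul) auto
  moreover have "hi (Suc m) h2" unfolding h2_def
  proof (intro hi_sum hi_smul)
    fix t assume t: "t \<in> Poly_Mapping.keys h"
    then have "m \<le> mlen t" using h(2) by (auto simp: hi_def in_keys_iff)
    then show "hi (Suc m) (H t)" using H[OF t] hi_mono by fastforce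
  qed
  ultimately show ?case by blast
qed

lemma D4: "y \<in> L2 \<Longrightarrow> y \<in> pcl_ideal A E"
proof -
  assume y: "y \<in> L2"
  obtain N where N: "\<And>t. lk y t \<noteq> 0 \<Longrightarrow> mlen t \<le> N" using bound_ex by blast
  obtain h where h: "h \<in> FA A" "hi (N+1) h" "y - h \<in> pcl_ideal A E" using D3[OF y] by blast
  have "sel (\<lambda>t. mlen t \<le> N) (y - h) = y"
  proof (rule poly_mapping_eqI)
    fix t
    show "lk (sel (\<lambda>t. mlen t \<le> N) (y - h)) t = lk y t"
      using N[of t] h(2) by (auto simp: lookup_minus hi_def)
  qed
  then show ?thesis using I_trunc[OF h(3), of N] by simp
qed

end


lemma omega_diag: "i \<notin> lsupp (omega1 f) \<Longrightarrow> lk f (Gen i) = 0"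
proof (rule ccontr)
  assume a: "i \<notin> lsupp (omega1 f)" and nz: "lk f (Gen i) \<noteq> 0"
  have "lk (omega1 f) (Gen i) = lk f (Gen i)" by (simp add: omega1_sel)
  then have "Gen i \<in> Poly_Mapping.keys (omega1 f)" using nz by (simp add: in_keys_iff)
  then have "i \<in> lsupp (omega1 f)" unfolding lsupp_def by force
  then show False using a by simp
qed

lemma step1_alg:
  fixes c :: "'a \<Rightarrow> 'a \<Rightarrow> 'r::comm_ring_1"
  assumes eq: "\<And>i j. i \<in> A \<Longrightarrow> j \<in> A \<Longrightarrow>
      ((if i = k then 1 else 0) + c i k) * c j l = ((if i = l then 1 else 0) + c i l) * c j k"
    and kl: "k \<in> A" "l \<in> A" "k \<noteq> l" and d: "c k k = 0" "c l l = 0"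
    and j: "j \<in> A"
  shows "c j k = 0"
proof -
  have "c k l = 0" using eq[of k k] kl d by simp
  then have "c j l = 0" using eq[of k j] kl d j by simp
  then show ?thesis using eq[of l j] kl d j by simp
qed

theorem lemma4:
  fixes A :: "'a set" and E :: "'a \<Rightarrow> 'a \<Rightarrow> bool"
    and L1 L2 :: "('a, 'r::idom) fna set" and g :: "'a \<Rightarrow> ('a, 'r) fna"
  assumes "finite A" and "card A \<ge> 2"
    and "\<And>p q. E p q \<Longrightarrow> E q p" and "\<And>p. \<not> E p p"
    and "\<And>p q. E p q \<Longrightarrow> p \<in> A \<and> q \<in> A"
    and "compl_connected A E"
    and "pcl_direct_sum A E L1 L2"
    and "\<And>i. i \<in> A \<Longrightarrow> g i \<in> FA A"
    and "\<And>i. i \<in> A \<Longrightarrow> gen i + g i \<in> L1"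
    and "\<And>i. i \<in> A \<Longrightarrow> - g i \<in> L2"
    and "\<And>i. i \<in> A \<Longrightarrow> i \<notin> lsupp (omega1 (g i))"
  shows "\<forall>i\<in>A. g i \<in> pcl_ideal A E"
proof -
  note fin = assms(1) and card2 = assms(2) and sym = assms(3) and cc = assms(6) and ds = assms(7)
    and gFA = assms(8) and g1 = assms(9) and g2 = assms(10) and om = assms(11)
  define c where "c j k = lk (g j) (Gen k)" for j k
  have diag: "c i i = 0" if "i \<in> A" for i using omega_diag[OF om[OF that]] by (simp add: c_def)
  have eqs: "((if i = k then 1 else 0) + c i k) * c j l = ((if i = l then 1 else 0) + c i l) * c j k"
    if "i \<in> A" "j \<in> A" "k \<noteq> l" "\<not> E k l" for i j k l
  proof -
    have "br (gen i + g i) (- g j) \<in> pcl_ideal A E"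
      using ds g1 g2 that by (auto simp: pcl_direct_sum_def)
    from I_phi[OF sym that(3,4) this]
    show ?thesis using that(3)
      by (cases "i = k"; cases "i = l") (simp_all add: lookup_add lookup_gen c_def algebra_simps)
  qed
  have nb: "\<exists>l. l \<in> A \<and> k \<noteq> l \<and> \<not> E k l" if k: "k \<in> A" for k
  proof -
    obtain y where y: "y \<in> A" "y \<noteq> k"
    proof (rule ccontr)
      assume "\<not> thesis"
      then have "A \<subseteq> {k}" using that by blast
      then have "card A \<le> card {k}" by (intro card_mono) auto
      then show False using card2 by simp
    qed
    have "(\<lambda>u v. u \<in> A \<and> v \<in> A \<and> u \<noteq> v \<and> \<not> E u v)\<^sup>*\<^sup>* k y"
      using cc k y unfolding compl_connected_def by blast
    then show ?thesis using y(2)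
      by (cases rule: converse_rtranclpE) auto
  qed
  have c0: "c j k = 0" if jk: "j \<in> A" "k \<in> A" for j k
  proof -
    obtain l where l: "l \<in> A" "k \<noteq> l" "\<not> E k l" using nb[OF jk(2)] by blast
    show ?thesis
      by (rule step1_alg[where A = A and l = l]) (use eqs[OF _ _ l(2,3)] l jk diag in auto)
  qed
  have ghi: "hi 2 (g j)" if j: "j \<in> A" for j
    unfolding hi_def
  proof (intro allI impI)
    fix t assume nz: "lk (g j) t \<noteq> 0"
    show "2 \<le> mlen t"
    proof (cases t)
      case (Gen a)
      then have "a \<in> A" using gFA[OF j] nz by (auto simp: FA_iff)
      then show ?thesis using c0[OF j] nz Gen by (simp add: c_def)
    next
      case (Br u v)
      then show ?thesis using mlen_pos[of u] mlen_pos[of v] by simp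
    qed
  qed
  show ?thesis
  proof
    fix i assume i: "i \<in> A"
    have "- g i \<in> pcl_ideal A E" using D4[OF ds gFA g1 g2 ghi g2[OF i]] by blast
    from I_uminus[OF this] show "g i \<in> pcl_ideal A E" by simp
  qed
qed

end
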